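(* Consider the APO procedure under the Bradley–Terry model with the DPO loss (see context), under realizability and boundedness. Then for each iteration $t\in\{0,\dots,T\}$, with probability at least $1-\delta$, $$\mathbb{E}_{x\sim\rho,\,y_1,y_2\sim\pi_t(\cdot|x)}\Big[\big(r^*(x,y_1)-r^*(x,y_2)-r_t(x,y_1)+r_t(x,y_2)\big)^2\Big]\le O\Big(\frac{\log(|\Pi|/\delta)}{N}\Big),$$ where $r_t(x,y)=\beta\log\hat{\pi}_{t+1}(y|x)-\beta\log\pi_t(y|x)$.
   Context: Let $\mathcal{X},\mathcal{Y}$ be finite sets, $\rho$ a distribution on $\mathcal{X}$, $\Pi$ a finite class of full-support policies. Bradley–Terry model: latent reward $r^*:\mathcal{X}\times\mathcal{Y}\to[-1,1]$ with $\mathbb{P}(y_1\succ y_2|x)=\sigma(r^*(x,y_1)-r^*(x,y_2))$, $\sigma(z)=1/(1+e^{-z})$. APO procedure with $\pi_{\mathrm{ref}}\in\Pi$, $\beta>0$, $\alpha$, $T$, $N$: $\pi_0=\hat{\pi}_0=\pi_{\mathrm{ref}}$; for $t=0,\dots,T$: collect $\mathcal{D}_t$ of $N$ triples $(x,y^w,y^l)$, $x\sim\rho$, two responses drawn from $\pi_t(\cdot|x)$ labeled by the Bradley–Terry model; with $r_\pi(x,y)=\beta\log\frac{\pi(y|x)}{\pi_t(y|x)}$, let $\hat{\pi}_{t+1}\in\arg\min_{\pi\in\Pi}\frac1N\sum_{\mathcal{D}_t}-\log\sigma(r_\pi(x,y^w)-r_\pi(x,y^l))$; let $\pi_{t+1}(y|x)\propto\hat{\pi}_{t+1}(y|x)(\hat{\pi}_{t+1}(y|x)/\hat{\pi}_t(y|x))^{\alpha}$.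 Realizability: for each $\pi\in\Pi$, $\pi(\cdot|x)\exp(r^*(x,\cdot)/\beta)/Z_\pi(x)\in\Pi$. Boundedness: $\beta\log\frac{\pi(y|x)}{\pi_t(y|x)}\in[-R,R]$ for all $\pi,\pi_t\in\Pi$, $x,y$. $O(\cdot)$ hides constant factors depending only on $R$. *)

theory Defs
  imports "HOL-Probability.Probability"
begin

text \<open>Contexts are natural numbers (restricted to a finite set X), responses are natural
numbers (restricted to a finite set Y).\<close>

type_synonym policy = "nat \<Rightarrow> nat pmf"
type_synonym triple = "nat \<times> nat \<times> nat"

definition sigmoid :: "real \<Rightarrow> real" where
  "sigmoid z = 1 / (1 + exp (- z))"

definition full_support :: "nat set \<Rightarrow> nat set \<Rightarrow> policy \<Rightarrow> bool" where
  "full_support X Y \<pi> \<longleftrightarrow> (\<forall>x\<in>X. set_pmf (\<pi> x) = Y)"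

definition normalize_policy :: "nat set \<Rightarrow> (nat \<Rightarrow> nat \<Rightarrow> real) \<Rightarrow> policy" where
  "normalize_policy Y w x = embed_pmf (\<lambda>y. if y \<in> Y then w x y / (\<Sum>y'\<in>Y. w x y') else 0)"

definition tilt_policy :: "nat set \<Rightarrow> real \<Rightarrow> (nat \<Rightarrow> nat \<Rightarrow> real) \<Rightarrow> policy \<Rightarrow> policy" where
  "tilt_policy Y \<beta> r \<pi> = normalize_policy Y (\<lambda>x y. pmf (\<pi> x) y * exp (r x y / \<beta>))"

definition apo_update :: "nat set \<Rightarrow> real \<Rightarrow> policy \<Rightarrow> policy \<Rightarrow> policy" where
  "apo_update Y \<alpha> \<pi>hat_old \<pi>hat_new = normalize_policy Y
     (\<lambda>x y. pmf (\<pi>hat_new x) y * (pmf (\<pi>hat_new x) y / pmf (\<pi>hat_old x) y) powr \<alpha>)"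

text \<open>One labelled sample (x, y^w, y^l): x ~ rho, y1, y2 ~ pi(.|x) independently,
y1 preferred with probability sigma(r(x,y1) - r(x,y2)) (Bradley--Terry).\<close>
definition bt_sample :: "nat pmf \<Rightarrow> (nat \<Rightarrow> nat \<Rightarrow> real) \<Rightarrow> policy \<Rightarrow> triple pmf" where
  "bt_sample \<rho> r \<pi> =
     bind_pmf \<rho> (\<lambda>x. bind_pmf (\<pi> x) (\<lambda>y1. bind_pmf (\<pi> x) (\<lambda>y2.
       map_pmf (\<lambda>b. if b then (x, y1, y2) else (x, y2, y1))
         (bernoulli_pmf (sigmoid (r x y1 - r x y2))))))"

fun iid_pmf :: "nat \<Rightarrow> 'a pmf \<Rightarrow> 'a list pmf" where
  "iid_pmf 0 p = return_pmf []"
| "iid_pmf (Suc n) p = bind_pmf p (\<lambda>a. map_pmf (Cons a) (iid_pmf n p))"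

definition dpo_loss :: "real \<Rightarrow> policy \<Rightarrow> triple list \<Rightarrow> policy \<Rightarrow> real" where
  "dpo_loss \<beta> \<pi>t D \<pi> =
     (\<Sum>(x, yw, yl)\<leftarrow>D.
        - ln (sigmoid (\<beta> * ln (pmf (\<pi> x) yw / pmf (\<pi>t x) yw)
                       - \<beta> * ln (pmf (\<pi> x) yl / pmf (\<pi>t x) yl)))) / real (length D)"

definition is_dpo_argmin :: "policy set \<Rightarrow> real \<Rightarrow> policy \<Rightarrow> triple list \<Rightarrow> policy \<Rightarrow> bool" where
  "is_dpo_argmin Pol \<beta> \<pi>t D \<pi>hat \<longleftrightarrow>
     \<pi>hat \<in> Pol \<and> (\<forall>\<pi>\<in>Pol. dpo_loss \<beta> \<pi>t D \<pi>hat \<le> dpo_loss \<beta> \<pi>t D \<pi>)"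

text \<open>Distribution of the state (pi_t, hat pi_t) of APO. The selector sel t pi_t D_t
returns the chosen element hat pi_{t+1} of the argmin (ties broken arbitrarily).\<close>
primrec apo_state :: "nat set \<Rightarrow> nat pmf \<Rightarrow> (nat \<Rightarrow> nat \<Rightarrow> real) \<Rightarrow> real \<Rightarrow> nat
    \<Rightarrow> (nat \<Rightarrow> policy \<Rightarrow> triple list \<Rightarrow> policy) \<Rightarrow> policy \<Rightarrow> nat \<Rightarrow> (policy \<times> policy) pmf" where
  "apo_state Y \<rho> r \<alpha> N sel \<pi>ref 0 = return_pmf (\<pi>ref, \<pi>ref)"
| "apo_state Y \<rho> r \<alpha> N sel \<pi>ref (Suc t) =
     bind_pmf (apo_state Y \<rho> r \<alpha> N sel \<pi>ref t) (\<lambda>(\<pi>, \<pi>hat).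
       map_pmf (\<lambda>D. (apo_update Y \<alpha> \<pi>hat (sel t \<pi> D), sel t \<pi> D))
         (iid_pmf N (bt_sample \<rho> r \<pi>)))"

text \<open>Joint distribution of (pi_t, hat pi_{t+1}) in round t.\<close>
definition apo_round :: "nat set \<Rightarrow> nat pmf \<Rightarrow> (nat \<Rightarrow> nat \<Rightarrow> real) \<Rightarrow> real \<Rightarrow> nat
    \<Rightarrow> (nat \<Rightarrow> policy \<Rightarrow> triple list \<Rightarrow> policy) \<Rightarrow> policy \<Rightarrow> nat \<Rightarrow> (policy \<times> policy) pmf" where
  "apo_round Y \<rho> r \<alpha> N sel \<pi>ref t =
     bind_pmf (apo_state Y \<rho> r \<alpha> N sel \<pi>ref t) (\<lambda>(\<pi>, \<pi>hat).
       map_pmf (\<lambda>D. (\<pi>, sel t \<pi> D)) (iid_pmf N (bt_sample \<rho> r \<pi>)))"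

definition reward_sq_error :: "nat pmf \<Rightarrow> (nat \<Rightarrow> nat \<Rightarrow> real) \<Rightarrow> real \<Rightarrow> policy \<Rightarrow> policy \<Rightarrow> real" where
  "reward_sq_error \<rho> r \<beta> \<pi>t \<pi>hat =
     (let rt = (\<lambda>x y. \<beta> * ln (pmf (\<pi>hat x) y) - \<beta> * ln (pmf (\<pi>t x) y))
      in measure_pmf.expectation
           (bind_pmf \<rho> (\<lambda>x. bind_pmf (\<pi>t x) (\<lambda>y1. map_pmf (\<lambda>y2. (x, y1, y2)) (\<pi>t x))))
           (\<lambda>(x, y1, y2). (r x y1 - r x y2 - rt x y1 + rt x y2)\<^sup>2))"

end

theory Submission
  imports Defs
begin


lemma sigmoid_pos: "0 < sigmoid z" unfolding sigmoid_def by (simp add: add_pos_pos)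
lemma sigmoid_lt1: "sigmoid z < 1" unfolding sigmoid_def by (simp add: add_pos_pos)
lemma sigmoid_neg: "sigmoid (- z) = 1 - sigmoid z"
proof -
  have "1 + exp z > 0" by (simp add: add_pos_pos)
  then show ?thesis unfolding sigmoid_def by (simp add: field_simps exp_minus)
qed

lemma bc_step:
  fixes a b :: real
  assumes "0 < a" "a < 1" "0 < b" "b < 1"
  shows "(a - b)^2 \<le> 8 * (1 - (sqrt (a * b) + sqrt ((1 - a) * (1 - b))))"
proof -
  define sa sb sa' sb' where "sa = sqrt a" "sb = sqrt b" "sa' = sqrt (1-a)" "sb' = sqrt (1-b)"
  have h: "sa^2 = a" "sb^2 = b" "sa'^2 = 1 - a" "sb'^2 = 1 - b"
    using assms by (auto simp: sa_sb_sa'_sb'_def)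
  have prod: "sqrt (a*b) = sa * sb" "sqrt ((1-a)*(1-b)) = sa' * sb'"
    by (auto simp: sa_sb_sa'_sb'_def real_sqrt_mult)
  have le1: "sa \<le> 1" "sb \<le> 1" "0 \<le> sa" "0 \<le> sb" using assms by (auto simp: sa_sb_sa'_sb'_def)
  have e1: "1 - (sa * sb + sa' * sb') = ((sa - sb)^2 + (sa' - sb')^2) / 2"
    using h by (simp add: power2_eq_square algebra_simps)
  have "(a - b)^2 = (sa - sb)^2 * (sa + sb)^2" using h by (simp add: power2_eq_square algebra_simps)
  also have "\<dots> \<le> (sa - sb)^2 * 4"
  proof (rule mult_left_mono)
    have "(sa + sb)^2 \<le> 2^2" using le1 by (intro power_mono) auto
    then show "(sa + sb)^2 \<le> 4" by simp
  qed simp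
  also have "\<dots> \<le> 8 * (1 - (sa * sb + sa' * sb'))" unfolding e1 by simp
  finally show ?thesis using prod by simp
qed

lemma exp_diff_lb:
  fixes a b M :: real
  assumes "\<bar>a\<bar> \<le> M" "\<bar>b\<bar> \<le> M"
  shows "exp (- M) * \<bar>a - b\<bar> \<le> \<bar>exp a - exp b\<bar>"
proof -
  have key: "exp (- M) * (x - y) \<le> exp x - exp y" if "y \<le> x" "\<bar>y\<bar> \<le> M" for x y :: real
  proof -
    have "exp (-M) \<le> exp y" using that by simp
    hence "exp (- M) * (x - y) \<le> exp y * (x - y)" using that by (intro mult_right_mono) auto
    also have "\<dots> \<le> exp y * (exp (x - y) - 1)" using exp_ge_add_one_self[of "x-y"] by (intro mult_left_mono) (auto simp: algebra_simps)
    also have "\<dots> = exp x - exp y" by (simp add: algebra_simps exp_diff)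
    finally show ?thesis .
  qed
  show ?thesis
  proof (cases "b \<le> a")
    case True then show ?thesis using key[of b a] assms by simp
  next
    case False then show ?thesis using key[of a b] assms by simp
  qed
qed

definition KK :: "real \<Rightarrow> real" where "KK M = 8 * exp (2*M) * (1 + exp M)^4"

lemma KK_pos: "KK M > 0"
proof -
  have "(0::real) < 1 + exp M" by (simp add: add_pos_pos)
  then show ?thesis unfolding KK_def by simp
qed

lemma key_ineq:
  fixes d u M :: real
  assumes "\<bar>d\<bar> \<le> M" "\<bar>u\<bar> \<le> M"
  shows "(d - u)^2 \<le> KK M * (1 - (sqrt (sigmoid d * sigmoid u) + sqrt (sigmoid (-d) * sigmoid (-u))))"
proof -
  define D where "D = (1 + exp (-d)) * (1 + exp (-u))"
  have Dpos: "D > 0" unfolding D_def by (simp add: add_pos_pos)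
  have p1: "1 + exp (-d) > 0" "1 + exp (-u) > 0" by (simp_all add: add_pos_pos)
  have sd: "sigmoid d - sigmoid u = (exp (-u) - exp (-d)) / D"
    unfolding sigmoid_def D_def using p1 by (simp add: field_simps)
  have D_le: "D \<le> (1 + exp M)^2"
  proof -
    have "1 + exp (-d) \<le> 1 + exp M" "1 + exp (-u) \<le> 1 + exp M" using assms by auto
    hence "D \<le> (1 + exp M) * (1 + exp M)" unfolding D_def
      by (intro mult_mono) (auto simp: add_pos_pos less_imp_le)
    thus ?thesis by (simp add: power2_eq_square)
  qed
  have e: "exp (- M) * \<bar>d - u\<bar> \<le> \<bar>exp (-u) - exp (-d)\<bar>"
    using exp_diff_lb[of "-u" M "-d"] assms by (simp add: abs_minus_commute)
  have "\<bar>d - u\<bar> = exp M * (exp (-M) * \<bar>d - u\<bar>)" by (simp add: exp_minus field_simps)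
  also have "\<dots> \<le> exp M * \<bar>exp (-u) - exp (-d)\<bar>" using e by simp
  also have "\<bar>exp (-u) - exp (-d)\<bar> = D * \<bar>sigmoid d - sigmoid u\<bar>" using sd Dpos by (simp add: abs_div)
  also have "exp M * (D * \<bar>sigmoid d - sigmoid u\<bar>) \<le> exp M * ((1 + exp M)^2 * \<bar>sigmoid d - sigmoid u\<bar>)"
    using D_le by (intro mult_left_mono mult_right_mono) auto
  finally have l: "\<bar>d - u\<bar> \<le> exp M * (1 + exp M)^2 * \<bar>sigmoid d - sigmoid u\<bar>" by (simp add: mult.assoc)
  have "(d - u)^2 = \<bar>d - u\<bar>^2" by simp
  also have "\<dots> \<le> (exp M * (1 + exp M)^2 * \<bar>sigmoid d - sigmoid u\<bar>)^2"
    using l by (intro power_mono) auto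
  also have "\<dots> = exp (2*M) * (1 + exp M)^4 * (sigmoid d - sigmoid u)^2"
  proof -
    have "exp (2*M) = exp M ^ 2" by (simp add: exp_double[symmetric] mult.commute)
    then show ?thesis by (simp add: power_mult_distrib power_even_abs_numeral flip: power_mult)
  qed
  also have "\<dots> \<le> exp (2*M) * (1 + exp M)^4 * (8 * (1 - (sqrt (sigmoid d * sigmoid u) + sqrt ((1 - sigmoid d) * (1 - sigmoid u)))))"
    by (intro mult_left_mono bc_step) (auto simp: sigmoid_pos sigmoid_lt1)
  finally show ?thesis by (simp add: KK_def sigmoid_neg algebra_simps)
qed



abbreviation E :: "'a pmf \<Rightarrow> ('a \<Rightarrow> real) \<Rightarrow> real" where
  "E M f \<equiv> measure_pmf.expectation M f"

lemma E_sum: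
  assumes "finite (set_pmf M)"
  shows "E M f = (\<Sum>a\<in>set_pmf M. pmf M a * f a)"
  using assms by (subst integral_measure_pmf[of "set_pmf M"]) auto

lemma E_sum':
  assumes "finite A" "set_pmf M \<subseteq> A"
  shows "E M f = (\<Sum>a\<in>A. pmf M a * f a)"
  using assms by (subst integral_measure_pmf[of A]) auto

lemma E_mono:
  assumes "finite (set_pmf M)" "\<And>x. x \<in> set_pmf M \<Longrightarrow> f x \<le> g x"
  shows "E M f \<le> E M g"
  unfolding E_sum[OF assms(1)] using assms(2) by (intro sum_mono mult_left_mono) auto

lemma E_cong:
  assumes "\<And>x. x \<in> set_pmf M \<Longrightarrow> f x = g x"
  shows "E M f = E M g"
  using assms by (intro integral_cong_AE) (auto simp: AE_measure_pmf_iff)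

lemma E_bind:
  assumes fin: "finite (set_pmf M)" "\<And>x. x \<in> set_pmf M \<Longrightarrow> finite (set_pmf (N x))"
  shows "E (bind_pmf M N) f = E M (\<lambda>x. E (N x) f)"
proof -
  define S where "S = (\<Union>x\<in>set_pmf M. set_pmf (N x))"
  have fS: "finite S" using fin by (auto simp: S_def)
  have "E (bind_pmf M N) f = (\<Sum>a\<in>S. pmf (bind_pmf M N) a * f a)"
    by (rule E_sum'[OF fS]) (auto simp: S_def)
  also have "\<dots> = (\<Sum>a\<in>S. (\<Sum>x\<in>set_pmf M. pmf M x * pmf (N x) a) * f a)"
    by (intro sum.cong refl) (simp add: pmf_bind E_sum[OF fin(1)])
  also have "\<dots> = (\<Sum>x\<in>set_pmf M. pmf M x * (\<Sum>a\<in>S. pmf (N x) a * f a))"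
    by (simp add: sum_distrib_left sum_distrib_right mult_ac sum.swap[of _ S])
  also have "\<dots> = (\<Sum>x\<in>set_pmf M. pmf M x * E (N x) f)"
    by (intro sum.cong refl) (subst E_sum'[OF fS], auto simp: S_def)
  also have "\<dots> = E M (\<lambda>x. E (N x) f)" by (simp add: E_sum[OF fin(1)])
  finally show ?thesis .
qed

lemma finite_iid: "finite (set_pmf p) \<Longrightarrow> finite (set_pmf (iid_pmf n p))"
  by (induction n) auto

lemma E_iid_prod:
  assumes "finite (set_pmf p)"
  shows "E (iid_pmf n p) (\<lambda>D. prod_list (map g D)) = (E p g) ^ n"
proof (induction n)
  case 0 then show ?case by simp
next
  case (Suc n)
  have "E (iid_pmf (Suc n) p) (\<lambda>D. prod_list (map g D))
      = E p (\<lambda>a. E (map_pmf (Cons a) (iid_pmf n p)) (\<lambda>D. prod_list (map g D)))"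
    using assms finite_iid[OF assms] by (simp only: iid_pmf.simps, subst E_bind) auto
  also have "\<dots> = E p (\<lambda>a. g a * E p g ^ n)"
    using Suc by simp
  also have "\<dots> = E p g ^ Suc n" by simp
  finally show ?case .
qed

lemma prob_bind_lb:
  assumes "\<And>x. x \<in> set_pmf M \<Longrightarrow> measure_pmf.prob (N x) A \<ge> c" "c \<ge> 0"
  shows "measure_pmf.prob (bind_pmf M N) A \<ge> c"
proof -
  have "ennreal c = (\<integral>\<^sup>+x. ennreal c \<partial>M)" by (simp add: measure_pmf.emeasure_space_1)
  also have "\<dots> \<le> (\<integral>\<^sup>+x. emeasure (N x) A \<partial>M)"
    using assms by (intro nn_integral_mono_AE)
      (auto simp: AE_measure_pmf_iff measure_pmf.emeasure_eq_measure)
  also have "\<dots> = emeasure (bind_pmf M N) A" by simp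
  finally show ?thesis using assms(2) by (simp add: measure_pmf.emeasure_eq_measure)
qed

lemma normalize_pmf:
  assumes "finite Y" "Y \<noteq> {}" "\<And>y. y \<in> Y \<Longrightarrow> w x y > 0"
  shows "pmf (normalize_policy Y w x) y = (if y \<in> Y then w x y / (\<Sum>y'\<in>Y. w x y') else 0)"
    and "set_pmf (normalize_policy Y w x) = Y"
proof -
  define S where "S = (\<Sum>y'\<in>Y. w x y')"
  have Spos: "S > 0" unfolding S_def using assms by (intro sum_pos) auto
  define f where "f = (\<lambda>y. if y \<in> Y then w x y / S else 0)"
  have nn: "\<And>y. 0 \<le> f y" using assms Spos by (auto simp: f_def less_imp_le)
  have "(\<integral>\<^sup>+y. ennreal (f y) \<partial>count_space UNIV) = (\<Sum>y\<in>Y. ennreal (f y))"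
    using assms by (intro nn_integral_count_space') (auto simp: f_def)
  also have "\<dots> = ennreal (\<Sum>y\<in>Y. f y)" using nn by (simp add: sum_ennreal)
  also have "(\<Sum>y\<in>Y. f y) = 1" using Spos by (simp add: f_def S_def sum_divide_distrib[symmetric])
  finally have int1: "(\<integral>\<^sup>+y. ennreal (f y) \<partial>count_space UNIV) = 1" by simp
  have eq: "normalize_policy Y w x = embed_pmf f" unfolding normalize_policy_def f_def S_def ..
  show p: "pmf (normalize_policy Y w x) y = (if y \<in> Y then w x y / (\<Sum>y'\<in>Y. w x y') else 0)"
    unfolding eq using pmf_embed_pmf[OF nn int1] by (simp add: f_def S_def)
  show "set_pmf (normalize_policy Y w x) = Y"
    unfolding eq using set_embed_pmf[OF nn int1] assms Spos by (auto simp: f_def S_def) (metis less_irrefl)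
qed



lemma pmf_pos_full: "set_pmf P = Y \<Longrightarrow> y \<in> Y \<Longrightarrow> pmf P y > 0"
  by (simp add: pmf_positive_iff)

lemma apo_inv:
  assumes "finite Y" "Y \<noteq> {}" "\<pi>ref \<in> Pol" "\<forall>\<pi>\<in>Pol. full_support X Y \<pi>" "\<And>s \<pi> D. sel s \<pi> D \<in> Pol"
  shows "(\<pi>, \<pi>h) \<in> set_pmf (apo_state Y \<rho> r \<alpha> N sel \<pi>ref s) \<Longrightarrow> \<pi>h \<in> Pol \<and> (\<forall>x\<in>X. set_pmf (\<pi> x) = Y)"
proof (induction s arbitrary: \<pi> \<pi>h)
  case 0
  then show ?case using assms by (auto simp: full_support_def)
next
  case (Suc s)
  from Suc.prems obtain \<pi>0 \<pi>h0 D where st: "(\<pi>0, \<pi>h0) \<in> set_pmf (apo_state Y \<rho> r \<alpha> N sel \<pi>ref s)"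
    and eq: "\<pi> = apo_update Y \<alpha> \<pi>h0 (sel s \<pi>0 D)" "\<pi>h = sel s \<pi>0 D"
    by auto
  from Suc.IH[OF st] have h0: "\<pi>h0 \<in> Pol" by blast
  have new: "sel s \<pi>0 D \<in> Pol" by (rule assms(5))
  show ?case
  proof (intro conjI ballI)
    show "\<pi>h \<in> Pol" using eq new by simp
    fix x assume x: "x \<in> X"
    have f1: "set_pmf (sel s \<pi>0 D x) = Y" "set_pmf (\<pi>h0 x) = Y"
      using new h0 x assms(4) by (auto simp: full_support_def)
    show "set_pmf (\<pi> x) = Y" unfolding eq apo_update_def
      by (rule normalize_pmf(2)[OF assms(1,2)])
         (use f1 in \<open>auto intro!: mult_pos_pos simp: pmf_positive_iff\<close>; metis set_pmf_iff)+
  qed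
qed

lemma tilt_delta:
  assumes "finite Y" "Y \<noteq> {}" "set_pmf (p x) = Y" "\<beta> > 0" "a \<in> Y" "b \<in> Y"
  shows "\<beta> * ln (pmf (tilt_policy Y \<beta> r p x) a / pmf (p x) a)
       - \<beta> * ln (pmf (tilt_policy Y \<beta> r p x) b / pmf (p x) b) = r x a - r x b"
proof -
  define Z where "Z = (\<Sum>y'\<in>Y. pmf (p x) y' * exp (r x y' / \<beta>))"
  have w: "\<And>y. y \<in> Y \<Longrightarrow> pmf (p x) y * exp (r x y / \<beta>) > 0"
    using assms by (auto simp: pmf_positive_iff)
  have Zpos: "Z > 0" unfolding Z_def using w assms by (intro sum_pos) auto
  have t: "pmf (tilt_policy Y \<beta> r p x) y = pmf (p x) y * exp (r x y / \<beta>) / Z" if "y \<in> Y" for y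
    unfolding tilt_policy_def using normalize_pmf(1)[OF assms(1,2), of "\<lambda>x y. pmf (p x) y * exp (r x y / \<beta>)" x y] w that
    by (simp add: Z_def)
  have l: "\<beta> * ln (pmf (tilt_policy Y \<beta> r p x) y / pmf (p x) y) = r x y - \<beta> * ln Z" if "y \<in> Y" for y
  proof -
    have py: "pmf (p x) y > 0" using assms that by (auto simp: pmf_positive_iff)
    have "pmf (tilt_policy Y \<beta> r p x) y / pmf (p x) y = exp (r x y / \<beta>) / Z" using t[OF that] py by simp
    then show ?thesis using Zpos assms(4) by (simp add: ln_div right_diff_distrib)
  qed
  show ?thesis using l[OF assms(5)] l[OF assms(6)] by simp
qed

lemma half_exp:
  fixes a b :: real assumes "a > 0" "b > 0"
  shows "b * exp ((ln a - ln b) / 2) = sqrt (b * a)"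
proof -
  have "exp ((ln a - ln b) / 2) = sqrt (a / b)"
    using assms by (simp add: powr_half_sqrt[symmetric] powr_def ln_div)
  moreover have "b * sqrt (a / b) = sqrt (b * a)"
    using assms by (metis less_imp_le nonzero_mult_div_cancel_left order.irrefl real_sqrt_abs real_sqrt_mult abs_of_pos power2_eq_square times_divide_eq_right mult.assoc)
  ultimately show ?thesis by simp
qed

lemma prod_exp: "prod_list (map (\<lambda>z. exp (h z :: real)) D) = exp (sum_list (map h D))"
  by (induction D) (simp_all add: mult_exp_exp)



lemma fin_bool_pmf: "finite (set_pmf (B :: bool pmf))"
  by (rule finite_subset[of _ UNIV]) auto

lemma sum_list_half: "sum_list (map (\<lambda>z. (a z - b z) / 2) D) = (sum_list (map a D) - sum_list (map b D)) / (2::real)"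
  by (induction D) (simp_all add: field_simps)

lemma sum_list_neg: "sum_list (map (\<lambda>z. - a z) D) = - sum_list (map a D :: real list)"
  by (induction D) simp_all

lemma E_lin:
  assumes "finite (set_pmf M)"
  shows "E M (\<lambda>z. k * (1 - F z)) = k * (1 - E M F)"
proof -
  have "E M (\<lambda>z. k * (1 - F z)) = k * ((\<Sum>a\<in>set_pmf M. pmf M a) - (\<Sum>a\<in>set_pmf M. pmf M a * F a))"
    unfolding E_sum[OF assms] by (simp add: sum_distrib_left sum_subtractf algebra_simps)
  also have "(\<Sum>a\<in>set_pmf M. pmf M a) = 1" using assms by (simp add: sum_pmf_eq_1)
  finally show ?thesis by (simp add: E_sum[OF assms])
qed

lemma round_bound:
  fixes p pst :: policy and selD :: "triple list \<Rightarrow> policy"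
  assumes X: "finite X" and Yf: "finite Y" and Yne: "Y \<noteq> {}" and rhoX: "set_pmf \<rho> \<subseteq> X"
    and Polf: "finite Pol" and full: "\<forall>\<pi>\<in>Pol. full_support X Y \<pi>"
    and rb: "\<forall>x\<in>X. \<forall>y\<in>Y. \<bar>r x y\<bar> \<le> 1" and \<beta>: "\<beta> > 0" and N: "N > 0" and \<delta>: "0 < \<delta>" "\<delta> < 1"
    and am: "\<And>D. is_dpo_argmin Pol \<beta> p D (selD D)"
    and pfull: "\<forall>x\<in>X. set_pmf (p x) = Y"
    and pst: "pst \<in> Pol" "\<forall>x\<in>X. pst x = tilt_policy Y \<beta> r p x"
    and bnd: "\<forall>q\<in>Pol. \<forall>x\<in>X. \<forall>y\<in>Y. \<bar>\<beta> * ln (pmf (q x) y / pmf (p x) y)\<bar> \<le> R"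
  shows "measure_pmf.prob (iid_pmf N (bt_sample \<rho> r p))
      {D. reward_sq_error \<rho> r \<beta> p (selD D) \<le> KK (2 + 2*\<bar>R\<bar>) * ln (real (card Pol) / \<delta>) / real N} \<ge> 1 - \<delta>"
proof -
  define M where "M = 2 + 2*\<bar>R\<bar>"
  define Q where "Q = bt_sample \<rho> r p"
  define P3 where "P3 = bind_pmf \<rho> (\<lambda>x. bind_pmf (p x) (\<lambda>y1. map_pmf (\<lambda>y2. (x, y1, y2)) (p x)))"
  define \<Delta> where "\<Delta> q z = (case z of (x, a, b) \<Rightarrow> \<beta> * ln (pmf (q x) a / pmf (p x) a) - \<beta> * ln (pmf (q x) b / pmf (p x) b))"
    for q :: policy and z :: triple
  define g where "g q z = exp ((ln (sigmoid (\<Delta> q z)) - ln (sigmoid (\<Delta> pst z))) / 2)" for q z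
  define BC where "BC d u = sqrt (sigmoid d * sigmoid u) + sqrt (sigmoid (-d) * sigmoid (-u))" for d u :: real
  define m where "m q = E Q (g q)" for q
  define c where "c = real (card Pol) / \<delta>"
  have finrho: "finite (set_pmf \<rho>)" using rhoX X finite_subset by blast
  have finp: "\<And>x. x \<in> set_pmf \<rho> \<Longrightarrow> finite (set_pmf (p x))" using pfull rhoX Yf by auto
  have suppQ: "set_pmf Q \<subseteq> X \<times> Y \<times> Y" using pfull rhoX unfolding Q_def bt_sample_def by auto
  have finQ: "finite (set_pmf Q)" using suppQ X Yf finite_subset by blast
  have suppP3: "set_pmf P3 \<subseteq> X \<times> Y \<times> Y" using pfull rhoX unfolding P3_def by auto
  have finP3: "finite (set_pmf P3)" using suppP3 X Yf finite_subset by blast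
  have EQ: "E Q f = E \<rho> (\<lambda>x. E (p x) (\<lambda>y1. E (p x) (\<lambda>y2. sigmoid (r x y1 - r x y2) * f (x,y1,y2)
              + (1 - sigmoid (r x y1 - r x y2)) * f (x,y2,y1))))" for f
    unfolding Q_def bt_sample_def
    apply (subst E_bind)
      apply (rule finrho)
     apply (simp add: finp fin_bool_pmf)
    apply (rule E_cong)
    apply (subst E_bind)
      apply (simp add: finp)
     apply (simp add: finp fin_bool_pmf)
    apply (rule E_cong)
    apply (subst E_bind)
      apply (simp add: finp)
     apply (simp add: fin_bool_pmf)
    apply (rule E_cong)
    apply (simp add: sigmoid_pos sigmoid_lt1 less_imp_le mult.commute)
    done
  have EP3: "E P3 f = E \<rho> (\<lambda>x. E (p x) (\<lambda>y1. E (p x) (\<lambda>y2. f (x,y1,y2))))" for f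
    unfolding P3_def
    apply (subst E_bind)
      apply (rule finrho)
     apply (simp add: finp)
    apply (rule E_cong)
    apply (subst E_bind)
      apply (simp add: finp)
     apply (simp add: finp)
    apply (rule E_cong)
    apply simp
    done
  have Dpst: "\<Delta> pst (x, a, b) = r x a - r x b" if "x \<in> X" "a \<in> Y" "b \<in> Y" for x a b
    unfolding \<Delta>_def using tilt_delta[OF Yf Yne _ \<beta> that(2,3), of p x r] pfull pst(2) that by simp
  have Dswap: "\<Delta> q (x, b, a) = - \<Delta> q (x, a, b)" for q x a b unfolding \<Delta>_def by simp
  have pw: "sigmoid (r x y1 - r x y2) * g q (x,y1,y2) + (1 - sigmoid (r x y1 - r x y2)) * g q (x,y2,y1)
      = BC (r x y1 - r x y2) (\<Delta> q (x,y1,y2))" if "x \<in> X" "y1 \<in> Y" "y2 \<in> Y" for q x y1 y2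
  proof -
    define d where "d = r x y1 - r x y2"
    define u where "u = \<Delta> q (x,y1,y2)"
    have "g q (x,y1,y2) = exp ((ln (sigmoid u) - ln (sigmoid d)) / 2)"
      unfolding g_def u_def d_def using Dpst that by simp
    moreover have "g q (x,y2,y1) = exp ((ln (sigmoid (-u)) - ln (sigmoid (-d))) / 2)"
      unfolding g_def u_def d_def using Dpst[of x y2 y1] Dswap[of q x y2 y1] that by simp
    ultimately show ?thesis unfolding BC_def d_def[symmetric] u_def[symmetric]
      by (simp add: half_exp sigmoid_pos flip: sigmoid_neg)
  qed
  have mBC: "m q = E P3 (\<lambda>(x,y1,y2). BC (r x y1 - r x y2) (\<Delta> q (x,y1,y2)))" for q
    unfolding m_def EQ EP3 using rhoX pfull
    by (intro E_cong) (auto intro!: E_cong simp: pw subset_iff)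
  have qpos: "pmf (q x) y > 0" if "q \<in> Pol" "x \<in> X" "y \<in> Y" for q x y
    using full that by (auto simp: full_support_def pmf_positive_iff)
  have ppos: "pmf (p x) y > 0" if "x \<in> X" "y \<in> Y" for x y
    using pfull that by (auto simp: pmf_positive_iff)
  have rew: "reward_sq_error \<rho> r \<beta> p q = E P3 (\<lambda>(x,y1,y2). (r x y1 - r x y2 - \<Delta> q (x,y1,y2))^2)"
    if q: "q \<in> Pol" for q
    unfolding reward_sq_error_def Let_def P3_def[symmetric]
  proof (rule E_cong)
    fix z assume "z \<in> set_pmf P3"
    then obtain x y1 y2 where z: "z = (x,y1,y2)" "x \<in> X" "y1 \<in> Y" "y2 \<in> Y" using suppP3 by auto
    show "(case z of (x, y1, y2) \<Rightarrow> (r x y1 - r x y2 - (\<beta> * ln (pmf (q x) y1) - \<beta> * ln (pmf (p x) y1))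
           + (\<beta> * ln (pmf (q x) y2) - \<beta> * ln (pmf (p x) y2)))\<^sup>2)
        = (case z of (x, y1, y2) \<Rightarrow> (r x y1 - r x y2 - \<Delta> q (x, y1, y2))\<^sup>2)"
    proof -
      have l1: "ln (pmf (q x) y1 / pmf (p x) y1) = ln (pmf (q x) y1) - ln (pmf (p x) y1)"
        by (rule ln_divide_pos) (use z qpos[OF q] ppos in auto)
      have l2: "ln (pmf (q x) y2 / pmf (p x) y2) = ln (pmf (q x) y2) - ln (pmf (p x) y2)"
        by (rule ln_divide_pos) (use z qpos[OF q] ppos in auto)
      show ?thesis unfolding z(1) \<Delta>_def prod.case l1 l2 by (simp add: algebra_simps)
    qed
  qed
  have keyq: "reward_sq_error \<rho> r \<beta> p q \<le> KK M * (1 - m q)" if q: "q \<in> Pol" for q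
  proof -
    have "reward_sq_error \<rho> r \<beta> p q \<le> E P3 (\<lambda>z. KK M * (1 - (case z of (x,y1,y2) \<Rightarrow> BC (r x y1 - r x y2) (\<Delta> q (x,y1,y2)))))"
      unfolding rew[OF q]
    proof (rule E_mono[OF finP3])
      fix z assume "z \<in> set_pmf P3"
      then obtain x y1 y2 where z: "z = (x,y1,y2)" "x \<in> X" "y1 \<in> Y" "y2 \<in> Y" using suppP3 by auto
      have d: "\<bar>r x y1 - r x y2\<bar> \<le> M" using rb z unfolding M_def
        by (smt (verit, best))
      have u: "\<bar>\<Delta> q (x,y1,y2)\<bar> \<le> M" using bnd q z unfolding M_def \<Delta>_def
        by (smt (verit, best) split_conv)
      show "(case z of (x,y1,y2) \<Rightarrow> (r x y1 - r x y2 - \<Delta> q (x,y1,y2))^2)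
          \<le> KK M * (1 - (case z of (x,y1,y2) \<Rightarrow> BC (r x y1 - r x y2) (\<Delta> q (x,y1,y2))))"
        using key_ineq[OF d u] z(1) unfolding BC_def by simp
    qed
    also have "\<dots> = KK M * (1 - m q)" unfolding mBC by (rule E_lin[OF finP3])
    finally show ?thesis .
  qed
  define h where "h q z = (ln (sigmoid (\<Delta> q z)) - ln (sigmoid (\<Delta> pst z))) / 2" for q z
  have gh: "g q = (\<lambda>z. exp (h q z))" for q unfolding g_def h_def ..
  define G where "G q D = prod_list (map (g q) D)" for q D
  have Gexp: "G q D = exp (sum_list (map (h q) D))" for q D unfolding G_def gh prod_exp ..
  have Polne: "card Pol > 0" using pst(1) Polf card_gt_0_iff by blast
  have cpos: "c > 0" unfolding c_def using Polne \<delta> by simp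
  have mpos: "m q > 0" for q
  proof -
    have "m q = (\<Sum>a\<in>set_pmf Q. pmf Q a * g q a)" unfolding m_def by (rule E_sum[OF finQ])
    also have "\<dots> > 0" using finQ set_pmf_not_empty[of Q]
      by (intro sum_pos) (auto simp: gh pmf_positive)
    finally show ?thesis .
  qed
  have markov: "measure_pmf.prob (iid_pmf N Q) {D. m q ^ N * c \<le> G q D} \<le> \<delta> / card Pol" for q
  proof -
    have "measure_pmf.prob (iid_pmf N Q) {D \<in> space (measure_pmf (iid_pmf N Q)). m q ^ N * c \<le> G q D}
        \<le> E (iid_pmf N Q) (G q) / (m q ^ N * c)"
      by (rule integral_Markov_inequality_measure[where A = UNIV])
         (auto intro!: integrable_measure_pmf_finite finite_iid finQ simp: Gexp cpos mpos)
    also have "E (iid_pmf N Q) (G q) = m q ^ N" unfolding G_def m_def by (rule E_iid_prod[OF finQ])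
    also have "m q ^ N / (m q ^ N * c) = \<delta> / card Pol" using mpos[of q] cpos unfolding c_def by simp
    finally show ?thesis by simp
  qed
  define B where "B = (\<Union>q\<in>Pol. {D. m q ^ N * c \<le> G q D})"
  have PB: "measure_pmf.prob (iid_pmf N Q) B \<le> \<delta>"
  proof -
    have "measure_pmf.prob (iid_pmf N Q) B \<le> (\<Sum>q\<in>Pol. measure_pmf.prob (iid_pmf N Q) {D. m q ^ N * c \<le> G q D})"
      unfolding B_def by (rule measure_pmf.finite_measure_subadditive_finite[OF Polf]) auto
    also have "\<dots> \<le> (\<Sum>q\<in>Pol. \<delta> / card Pol)" by (intro sum_mono markov)
    also have "\<dots> = \<delta>" using Polne by simp
    finally show ?thesis .
  qed
  have lossform: "dpo_loss \<beta> p D \<pi> = sum_list (map (\<lambda>z. - ln (sigmoid (\<Delta> \<pi> z))) D) / real (length D)" for D \<pi>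
  proof -
    have "(\<lambda>z. - ln (sigmoid (\<Delta> \<pi> z))) = (\<lambda>(x, yw, yl). - ln (sigmoid (\<beta> * ln (pmf (\<pi> x) yw / pmf (p x) yw)
                       - \<beta> * ln (pmf (\<pi> x) yl / pmf (p x) yl))))"
      by (auto simp: \<Delta>_def fun_eq_iff split: prod.split)
    then show ?thesis unfolding dpo_loss_def by simp
  qed
  have good: "reward_sq_error \<rho> r \<beta> p (selD D) \<le> KK M * ln c / real N" if D: "D \<notin> B" for D
  proof -
    define q where "q = selD D"
    have q: "q \<in> Pol" and le: "dpo_loss \<beta> p D q \<le> dpo_loss \<beta> p D pst"
      using am[of D] pst(1) unfolding q_def is_dpo_argmin_def by auto
    have Gq: "G q D < m q ^ N * c" using D q unfolding B_def by auto
    have sle: "sum_list (map (\<lambda>z. - ln (sigmoid (\<Delta> q z))) D) \<le> sum_list (map (\<lambda>z. - ln (sigmoid (\<Delta> pst z))) D)"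
    proof (cases "D = []")
      case True then show ?thesis by simp
    next
      case False
      then have "real (length D) > 0" by simp
      then show ?thesis using le unfolding lossform by (simp add: divide_le_cancel)
    qed
    have "sum_list (map (h q) D) \<ge> 0"
      using sle unfolding h_def sum_list_half sum_list_neg by simp
    then have "G q D \<ge> 1" unfolding Gexp by simp
    with Gq have "1 < m q ^ N * c" by simp
    then have "0 < ln (m q ^ N * c)" using mpos[of q] cpos by simp
    also have "ln (m q ^ N * c) = real N * ln (m q) + ln c" using mpos[of q] cpos by (simp add: ln_mult ln_realpow)
    finally have "- (real N * ln (m q)) < ln c" by simp
    moreover have "real N * (1 - m q) \<le> real N * (- ln (m q))"
      using ln_le_minus_one[OF mpos[of q]] by (intro mult_left_mono) auto
    ultimately have "real N * (1 - m q) < ln c" by simp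
    then have "1 - m q < ln c / real N" using N by (simp add: field_simps)
    then have "KK M * (1 - m q) \<le> KK M * (ln c / real N)" using KK_pos[of M] by (intro mult_left_mono) auto
    then show ?thesis using keyq[OF q] unfolding q_def by simp
  qed
  have "1 - \<delta> \<le> 1 - measure_pmf.prob (iid_pmf N Q) B" using PB by simp
  also have "\<dots> = measure_pmf.prob (iid_pmf N Q) (UNIV - B)"
    using measure_pmf.prob_compl[of B "iid_pmf N Q"] by simp
  also have "\<dots> \<le> measure_pmf.prob (iid_pmf N Q) {D. reward_sq_error \<rho> r \<beta> p (selD D) \<le> KK M * ln c / real N}"
    by (rule measure_pmf.finite_measure_mono) (use good in auto)
  finally show ?thesis unfolding Q_def M_def c_def .
qed



theorem lemma3:
  fixes R :: real
  shows "\<exists>C>0. \<forall>(X :: nat set) (Y :: nat set) (\<rho> :: nat pmf) (r :: nat \<Rightarrow> nat \<Rightarrow> real)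
      (Pol :: policy set) (\<pi>ref :: policy) (\<beta> :: real) (\<alpha> :: real) (T :: nat) (N :: nat)
      (sel :: nat \<Rightarrow> policy \<Rightarrow> triple list \<Rightarrow> policy) (\<delta> :: real) (t :: nat).
    finite X \<and> finite Y \<and> Y \<noteq> {} \<and> set_pmf \<rho> \<subseteq> X
    \<and> finite Pol \<and> (\<forall>\<pi>\<in>Pol. full_support X Y \<pi>)
    \<and> (\<forall>x\<in>X. \<forall>y\<in>Y. \<bar>r x y\<bar> \<le> 1)
    \<and> \<pi>ref \<in> Pol \<and> \<beta> > 0 \<and> N > 0 \<and> 0 < \<delta> \<and> \<delta> < 1 \<and> t \<le> T
    \<and> (\<forall>s \<pi> D. is_dpo_argmin Pol \<beta> \<pi> D (sel s \<pi> D))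
    \<comment> \<open>realizability, for the policies of the class and for the iterates pi_s, s \<le> T\<close>
    \<and> (\<forall>\<pi> \<in> Pol \<union> {\<pi>s. \<exists>s\<le>T. \<exists>\<pi>h. (\<pi>s, \<pi>h) \<in> set_pmf (apo_state Y \<rho> r \<alpha> N sel \<pi>ref s)}.
         \<exists>\<pi>'\<in>Pol. \<forall>x\<in>X. \<pi>' x = tilt_policy Y \<beta> r \<pi> x)
    \<comment> \<open>boundedness, for pi in the class and pi_t in the class or an iterate\<close>
    \<and> (\<forall>\<pi>\<in>Pol. \<forall>\<pi>s \<in> Pol \<union> {\<pi>s. \<exists>s\<le>T. \<exists>\<pi>h. (\<pi>s, \<pi>h) \<in> set_pmf (apo_state Y \<rho> r \<alpha> N sel \<pi>ref s)}.
         \<forall>x\<in>X. \<forall>y\<in>Y. \<bar>\<beta> * ln (pmf (\<pi> x) y / pmf (\<pi>s x) y)\<bar> \<le> R)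
    \<longrightarrow> measure_pmf.prob (apo_round Y \<rho> r \<alpha> N sel \<pi>ref t)
          {(\<pi>t, \<pi>hat). reward_sq_error \<rho> r \<beta> \<pi>t \<pi>hat \<le> C * ln (real (card Pol) / \<delta>) / real N}
        \<ge> 1 - \<delta>"
proof (rule exI[of _ "KK (2 + 2*\<bar>R\<bar>)"], intro conjI KK_pos allI impI, elim conjE)
  fix X Y :: "nat set" and \<rho> :: "nat pmf" and r :: "nat \<Rightarrow> nat \<Rightarrow> real" and Pol :: "policy set"
    and \<pi>ref :: policy and \<beta> \<alpha> :: real and T N :: nat and sel :: "nat \<Rightarrow> policy \<Rightarrow> triple list \<Rightarrow> policy"
    and \<delta> :: real and t :: nat
  assume X: "finite X" and Yf: "finite Y" and Yne: "Y \<noteq> {}" and rhoX: "set_pmf \<rho> \<subseteq> X"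
    and Polf: "finite Pol" and full: "\<forall>\<pi>\<in>Pol. full_support X Y \<pi>"
    and rb: "\<forall>x\<in>X. \<forall>y\<in>Y. \<bar>r x y\<bar> \<le> 1" and ref: "\<pi>ref \<in> Pol" and \<beta>: "\<beta> > 0" and N: "N > 0"
    and \<delta>: "0 < \<delta>" "\<delta> < 1" and tT: "t \<le> T"
    and am: "\<forall>s \<pi> D. is_dpo_argmin Pol \<beta> \<pi> D (sel s \<pi> D)"
    and real: "\<forall>\<pi> \<in> Pol \<union> {\<pi>s. \<exists>s\<le>T. \<exists>\<pi>h. (\<pi>s, \<pi>h) \<in> set_pmf (apo_state Y \<rho> r \<alpha> N sel \<pi>ref s)}.
         \<exists>\<pi>'\<in>Pol. \<forall>x\<in>X. \<pi>' x = tilt_policy Y \<beta> r \<pi> x"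
    and bnd: "\<forall>\<pi>\<in>Pol. \<forall>\<pi>s \<in> Pol \<union> {\<pi>s. \<exists>s\<le>T. \<exists>\<pi>h. (\<pi>s, \<pi>h) \<in> set_pmf (apo_state Y \<rho> r \<alpha> N sel \<pi>ref s)}.
         \<forall>x\<in>X. \<forall>y\<in>Y. \<bar>\<beta> * ln (pmf (\<pi> x) y / pmf (\<pi>s x) y)\<bar> \<le> R"
  have selPol: "\<And>s \<pi> D. sel s \<pi> D \<in> Pol" using am unfolding is_dpo_argmin_def by blast
  show "measure_pmf.prob (apo_round Y \<rho> r \<alpha> N sel \<pi>ref t)
          {(\<pi>t, \<pi>hat). reward_sq_error \<rho> r \<beta> \<pi>t \<pi>hat \<le> KK (2 + 2*\<bar>R\<bar>) * ln (real (card Pol) / \<delta>) / real N}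
        \<ge> 1 - \<delta>"
    unfolding apo_round_def
  proof (rule prob_bind_lb)
    show "0 \<le> 1 - \<delta>" using \<delta> by simp
    fix st assume st: "st \<in> set_pmf (apo_state Y \<rho> r \<alpha> N sel \<pi>ref t)"
    obtain p ph where stp: "st = (p, ph)" by (cases st)
    have iter: "p \<in> {\<pi>s. \<exists>s\<le>T. \<exists>\<pi>h. (\<pi>s, \<pi>h) \<in> set_pmf (apo_state Y \<rho> r \<alpha> N sel \<pi>ref s)}"
      using st stp tT by auto
    have pfull: "\<forall>x\<in>X. set_pmf (p x) = Y"
      using apo_inv[where sel=sel and \<rho>=\<rho> and r=r and \<alpha>=\<alpha> and N=N, OF Yf Yne ref full selPol, of p ph t] st stp by blast
    obtain pst where pst: "pst \<in> Pol" "\<forall>x\<in>X. pst x = tilt_policy Y \<beta> r p x"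
      using real iter by blast
    have bnd': "\<forall>q\<in>Pol. \<forall>x\<in>X. \<forall>y\<in>Y. \<bar>\<beta> * ln (pmf (q x) y / pmf (p x) y)\<bar> \<le> R"
      using bnd iter by blast
    have "1 - \<delta> \<le> measure_pmf.prob (iid_pmf N (bt_sample \<rho> r p))
      {D. reward_sq_error \<rho> r \<beta> p (sel t p D) \<le> KK (2 + 2*\<bar>R\<bar>) * ln (real (card Pol) / \<delta>) / real N}"
      by (rule round_bound[OF X Yf Yne rhoX Polf full rb \<beta> N \<delta> _ pfull pst bnd'])
         (use am in blast)
    then show "1 - \<delta> \<le> measure_pmf.prob ((\<lambda>(\<pi>, \<pi>hat). map_pmf (\<lambda>D. (\<pi>, sel t \<pi> D)) (iid_pmf N (bt_sample \<rho> r \<pi>))) st)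
          {(\<pi>t, \<pi>hat). reward_sq_error \<rho> r \<beta> \<pi>t \<pi>hat \<le> KK (2 + 2*\<bar>R\<bar>) * ln (real (card Pol) / \<delta>) / real N}"
      unfolding stp by (simp add: vimage_def)
  qed
qed

end
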